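(* Let $\rho\in(0,1)$, $\gamma>0$, $T>0$, and let $0<\lambda_1\le\lambda_2\le\cdots$ be positive numbers. Then for all $t\in[0,T]$ and $k\ge1$, $$A_{\rho}(\lambda_k,t)\ge C(\rho,\gamma,\lambda_1)>0,\qquad C(\rho,\gamma,\lambda_1)=\frac{\gamma\sin\rho\pi}{3\pi}\int_0^{\infty}\frac{r^{\rho-1}e^{-rT}}{\frac{r^2}{\lambda_1^2}+\gamma^2r^{2\rho}+1}dr,$$ where $A_{\rho}(\lambda,t)=\frac{\gamma}{\pi}\int_0^{\infty}e^{-rt}\frac{\lambda^2r^{\rho-1}\sin\rho\pi}{(-r+\lambda\gamma r^{\rho}\cos\rho\pi+\lambda)^2+(\lambda\gamma r^{\rho}\sin\rho\pi)^2}dr$.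
   Context: In the paper the $\lambda_k$ are the eigenvalues, arranged non-decreasingly, of a positive self-adjoint operator with compact resolvent on a separable Hilbert space. *)

theory Defs
  imports "HOL-Analysis.Analysis"
begin

definition A_rho :: "real \<Rightarrow> real \<Rightarrow> real \<Rightarrow> real \<Rightarrow> real" where
  "A_rho \<rho> \<gamma> lam t =
     \<gamma> / pi * (LBINT r:{0<..}. exp (- r * t) *
        (lam\<^sup>2 * r powr (\<rho> - 1) * sin (\<rho> * pi)) /
        ((- r + lam * \<gamma> * r powr \<rho> * cos (\<rho> * pi) + lam)\<^sup>2
          + (lam * \<gamma> * r powr \<rho> * sin (\<rho> * pi))\<^sup>2))"

definition C_const :: "real \<Rightarrow> real \<Rightarrow> real \<Rightarrow> real \<Rightarrow> real" where
  "C_const \<rho> \<gamma> lam1 T =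
     \<gamma> * sin (\<rho> * pi) / (3 * pi) *
     (LBINT r:{0<..}. r powr (\<rho> - 1) * exp (- r * T) /
        (r\<^sup>2 / lam1\<^sup>2 + \<gamma>\<^sup>2 * r powr (2 * \<rho>) + 1))"

end

theory Submission
  imports Defs
begin


lemma base1:
  assumes "0 < (\<rho>::real)"
  shows "set_integrable lborel {0<..1} (\<lambda>r::real. K * r powr (\<rho>-1))"
proof -
  have "(\<lambda>t. t powr (\<rho> - 1)) integrable_on {0<..1}"
    by (rule integrable_on_powr_from_0') (use assms in auto)
  hence "(\<lambda>t. t powr (\<rho> - 1)) absolutely_integrable_on {0<..1}"
    by (subst absolutely_integrable_on_iff_nonneg) auto
  from integrable_mult_right[OF this [unfolded set_integrable_def], of K]
  show ?thesis unfolding set_integrable_def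
    by (subst (asm) integrable_completion) (auto simp: mult_ac)
qed

lemma base2:
  assumes "(\<rho>::real) < 1"
  shows "set_integrable lborel {1..} (\<lambda>r::real. K * r powr (\<rho>-3))"
proof -
  have "(\<lambda>t. t powr (\<rho> - 3)) integrable_on {1..}"
    using has_integral_powr_to_inf[of "\<rho>-3" 1] assms by (auto simp: integrable_on_def)
  hence "(\<lambda>t. t powr (\<rho> - 3)) absolutely_integrable_on {1..}"
    by (subst absolutely_integrable_on_iff_nonneg) auto
  from integrable_mult_right[OF this [unfolded set_integrable_def], of K]
  show ?thesis unfolding set_integrable_def
    by (subst (asm) integrable_completion) (auto simp: mult_ac)
qed

lemma dominated:
  fixes f :: "real \<Rightarrow> real"
  assumes "0 < \<rho>" "\<rho> < 1" "f \<in> borel_measurable borel"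
   "\<And>r. 0<r \<Longrightarrow> r \<le> 1 \<Longrightarrow> \<bar>f r\<bar> \<le> K * r powr (\<rho>-1)"
   "\<And>r. 1 \<le> r \<Longrightarrow> \<bar>f r\<bar> \<le> K * r powr (\<rho>-3)"
  shows "set_integrable lborel {0<..} f"
proof -
  have m: "set_borel_measurable lborel S f" if [measurable]: "S \<in> sets borel" for S :: "real set"
  proof -
    have [measurable]: "f \<in> borel_measurable lborel" using assms(3) by simp
    show ?thesis unfolding set_borel_measurable_def by measurable
  qed
  have I1: "set_integrable lborel {0<..1} f"
  proof (rule set_integrable_bound[OF base1[OF assms(1), of K] m[of "{0<..1}"]])
    show "AE x in lborel. x \<in> {0<..1} \<longrightarrow> norm (f x) \<le> norm (K * x powr (\<rho> - 1))"
    proof (rule AE_I2, intro impI)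
      fix x :: real assume "x \<in> {0<..1}"
      thus "norm (f x) \<le> norm (K * x powr (\<rho> - 1))" using assms(4)[of x] by simp
    qed
  qed simp
  have I2: "set_integrable lborel {1..} f"
  proof (rule set_integrable_bound[OF base2[OF assms(2), of K] m[of "{1..}"]])
    show "AE x in lborel. x \<in> {1..} \<longrightarrow> norm (f x) \<le> norm (K * x powr (\<rho> - 3))"
    proof (rule AE_I2, intro impI)
      fix x :: real assume "x \<in> {1..}"
      thus "norm (f x) \<le> norm (K * x powr (\<rho> - 3))" using assms(5)[of x] by simp
    qed
  qed simp
  have "set_integrable lborel ({0<..1} \<union> {1..}) f"
    by (intro set_integrable_Un I1 I2) auto
  also have "{0<..1} \<union> {1..} = {(0::real)<..}" by auto
  finally show ?thesis .
qed


lemma sq3: "((x::real)+y+z)\<^sup>2 \<le> 3*(x\<^sup>2+y\<^sup>2+z\<^sup>2)"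
proof -
  have "0 \<le> (x-y)\<^sup>2 + (y-z)\<^sup>2 + (x-z)\<^sup>2" by simp
  thus ?thesis by (simp add: power2_eq_square algebra_simps)
qed

lemma D_upper:
  fixes r l l1 g p c sn :: real
  assumes "0 < l1" "l1 \<le> l" "0 \<le> r" "c\<^sup>2 + sn\<^sup>2 = 1"
  shows "(- r + l*g*p*c + l)\<^sup>2 + (l*g*p* sn)\<^sup>2 \<le> 3 * l\<^sup>2 * (r\<^sup>2/l1\<^sup>2 + g\<^sup>2*p\<^sup>2 + 1)"
proof -
  have h1: "(- r + l*g*p*c + l)\<^sup>2 \<le> 3*(r\<^sup>2 + (l*g*p*c)\<^sup>2 + l\<^sup>2)"
    using sq3[of "-r" "l*g*p*c" l] by simp
  have h2: "(l*g*p* sn)\<^sup>2 \<le> 3 * (l*g*p* sn)\<^sup>2" by simp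
  have eq: "3*(r\<^sup>2 + (l*g*p*c)\<^sup>2 + l\<^sup>2) + 3 * (l*g*p* sn)\<^sup>2 = 3*(r\<^sup>2 + (l*g*p)\<^sup>2*(c\<^sup>2+sn\<^sup>2) + l\<^sup>2)"
    by (simp add: power_mult_distrib algebra_simps)
  have "(- r + l*g*p*c + l)\<^sup>2 + (l*g*p* sn)\<^sup>2 \<le> 3*(r\<^sup>2 + (l*g*p)\<^sup>2*(c\<^sup>2+sn\<^sup>2) + l\<^sup>2)"
    using h1 h2 eq by linarith
  also have "\<dots> = 3*(r\<^sup>2 + (l*g*p)\<^sup>2 + l\<^sup>2)" using assms(4) by simp
  also have "\<dots> \<le> 3 * l\<^sup>2 * (r\<^sup>2/l1\<^sup>2 + g\<^sup>2*p\<^sup>2 + 1)"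
  proof -
    have "l1\<^sup>2 \<le> l\<^sup>2" using assms by (simp add: power_mono)
    hence "r\<^sup>2 \<le> l\<^sup>2 * (r\<^sup>2/l1\<^sup>2)" using assms(1)
      by (simp add: field_simps mult_right_mono)
    thus ?thesis by (simp add: power_mult_distrib algebra_simps)
  qed
  finally show ?thesis .
qed

lemma D_lower:
  fixes r l g p c sn :: real
  assumes "c\<^sup>2 + sn\<^sup>2 = 1"
  shows "(- r + l*g*p*c + l)\<^sup>2 + (l*g*p* sn)\<^sup>2 \<ge> (1 - \<bar>c\<bar>) * ((l-r)\<^sup>2 + (l*g*p)\<^sup>2)"
proof -
  define x where "x = l - r"
  define a where "a = l*g*p"
  have e: "(- r + l*g*p*c + l)\<^sup>2 + (l*g*p* sn)\<^sup>2 = x\<^sup>2 + 2*x*a*c + a\<^sup>2"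
  proof -
    have "(- r + l*g*p*c + l)\<^sup>2 + (l*g*p* sn)\<^sup>2 = x\<^sup>2 + 2*x*a*c + a\<^sup>2*(c\<^sup>2+sn\<^sup>2)"
      unfolding x_def a_def by (simp add: power2_eq_square algebra_simps)
    thus ?thesis using assms by simp
  qed
  have "\<bar>2*x*a\<bar> \<le> x\<^sup>2 + a\<^sup>2"
  proof -
    have "0 \<le> (\<bar>x\<bar> - \<bar>a\<bar>)\<^sup>2" by simp
    thus ?thesis by (simp add: power2_eq_square algebra_simps abs_mult)
  qed
  hence "\<bar>2*x*a*c\<bar> \<le> \<bar>c\<bar> * (x\<^sup>2 + a\<^sup>2)"
    by (simp add: abs_mult mult_left_mono mult.commute)
  hence "2*x*a*c \<ge> - \<bar>c\<bar> * (x\<^sup>2 + a\<^sup>2)" by linarith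
  hence "(1 - \<bar>c\<bar>) * (x\<^sup>2 + a\<^sup>2) \<le> x\<^sup>2 + 2*x*a*c + a\<^sup>2" by (simp add: algebra_simps)
  thus ?thesis using e by (simp add: x_def a_def)
qed

lemma eps_bound:
  fixes r l g \<rho> :: real
  assumes "0 < l" "0 < r" "0 < \<rho>"
  shows "(l-r)\<^sup>2 + (l*g*(r powr \<rho>))\<^sup>2 \<ge> min (1/5) (g\<^sup>2*((l/2) powr \<rho>)\<^sup>2/5) * (l\<^sup>2 + r\<^sup>2)"
proof (cases "r \<le> l/2 \<or> r \<ge> 2*l")
  case True
  have "(l-r)\<^sup>2 \<ge> (1/5) * (l\<^sup>2 + r\<^sup>2)"
    using True
  proof
    assume r: "r \<le> l/2"
    have "(l/2)\<^sup>2 \<le> (l-r)\<^sup>2" using r assms by (intro power_mono) auto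
    moreover have "r\<^sup>2 \<le> (l/2)\<^sup>2" using r assms by (intro power_mono) auto
    ultimately show ?thesis by (simp add: power_divide)
  next
    assume r: "2*l \<le> r"
    have "(r/2)\<^sup>2 \<le> (l-r)\<^sup>2" using r assms by (subst power2_commute) (intro power_mono, auto)
    moreover have "l\<^sup>2 \<le> (r/2)\<^sup>2" using r assms by (intro power_mono) auto
    ultimately show ?thesis by (simp add: power_divide)
  qed
  moreover have "min (1/5) (g\<^sup>2*((l/2) powr \<rho>)\<^sup>2/5) * (l\<^sup>2 + r\<^sup>2) \<le> (1/5) * (l\<^sup>2 + r\<^sup>2)"
    by (intro mult_right_mono) auto
  moreover have "0 \<le> (l*g*(r powr \<rho>))\<^sup>2" by simp
  ultimately show ?thesis by linarith
next
  case False
  hence r: "l/2 < r" "r < 2*l" by auto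
  have "(l/2) powr \<rho> \<le> r powr \<rho>" using r assms by (intro powr_mono2) auto
  hence "((l/2) powr \<rho>)\<^sup>2 \<le> (r powr \<rho>)\<^sup>2" by (intro power_mono) auto
  hence "g\<^sup>2*((l/2) powr \<rho>)\<^sup>2 \<le> g\<^sup>2*(r powr \<rho>)\<^sup>2" by (intro mult_left_mono) auto
  moreover have "l\<^sup>2 + r\<^sup>2 \<le> 5 * l\<^sup>2" proof -
    have "r\<^sup>2 \<le> (2*l)\<^sup>2" using r assms by (intro power_mono) auto
    thus ?thesis by simp
  qed
  ultimately have A: "(g\<^sup>2*((l/2) powr \<rho>)\<^sup>2/5) * (l\<^sup>2 + r\<^sup>2) \<le> (g\<^sup>2*((l/2) powr \<rho>)\<^sup>2/5) * (5 * l\<^sup>2)"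
    by (intro mult_left_mono) auto
  have B: "(g\<^sup>2*((l/2) powr \<rho>)\<^sup>2/5) * (5 * l\<^sup>2) = (g\<^sup>2*((l/2) powr \<rho>)\<^sup>2) * l\<^sup>2" by simp
  have C: "(g\<^sup>2*((l/2) powr \<rho>)\<^sup>2) * l\<^sup>2 \<le> (g\<^sup>2*(r powr \<rho>)\<^sup>2) * l\<^sup>2"
    using \<open>g\<^sup>2*((l/2) powr \<rho>)\<^sup>2 \<le> g\<^sup>2*(r powr \<rho>)\<^sup>2\<close> by (intro mult_right_mono) auto
  have D: "(g\<^sup>2*(r powr \<rho>)\<^sup>2) * l\<^sup>2 = (l*g*(r powr \<rho>))\<^sup>2" by (simp add: power_mult_distrib)
  have M: "min (1/5) (g\<^sup>2*((l/2) powr \<rho>)\<^sup>2/5) * (l\<^sup>2 + r\<^sup>2) \<le> (g\<^sup>2*((l/2) powr \<rho>)\<^sup>2/5) * (l\<^sup>2 + r\<^sup>2)"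
    by (intro mult_right_mono) auto
  have "0 \<le> (l-r)\<^sup>2" by simp
  show ?thesis using A B C D M \<open>0 \<le> (l-r)\<^sup>2\<close> by linarith
qed

lemma bound_form:
  fixes r \<kappa> L sn e N \<rho> :: real
  assumes "0<r" "0<\<kappa>" "0<L" "0 \<le> sn" "0\<le>e" "e\<le>1" "\<kappa>*(L+r\<^sup>2) \<le> N"
  shows "r \<le> 1 \<Longrightarrow> \<bar>e*(L*r powr (\<rho>-1)* sn)/N\<bar> \<le> (1+L)* sn/\<kappa> * r powr (\<rho>-1)"
    and "1 \<le> r \<Longrightarrow> \<bar>e*(L*r powr (\<rho>-1)* sn)/N\<bar> \<le> (1+L)* sn/\<kappa> * r powr (\<rho>-3)"
proof -
  have Lr: "0 < L + r\<^sup>2" using assms by (simp add: add_pos_nonneg)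
  have Npos: "0 < N" using assms Lr by (smt (verit) mult_pos_pos)
  have nn: "0 \<le> L*r powr (\<rho>-1)* sn" using assms by simp
  have "\<bar>e*(L*r powr (\<rho>-1)* sn)/N\<bar> = e*(L*r powr (\<rho>-1)* sn)/N"
    using assms Npos nn by simp
  also have "\<dots> \<le> (L*r powr (\<rho>-1)* sn)/N"
    using assms Npos nn by (simp add: divide_right_mono mult_left_le_one_le)
  also have "\<dots> \<le> (L*r powr (\<rho>-1)* sn)/(\<kappa>*(L+r\<^sup>2))"
    using assms Lr nn Npos by (intro divide_left_mono) (auto intro: mult_pos_pos)
  also have "\<dots> = (L/(L+r\<^sup>2)) * (sn/\<kappa>) * r powr (\<rho>-1)"
    by (simp add: field_simps)
  finally have main: "\<bar>e*(L*r powr (\<rho>-1)* sn)/N\<bar> \<le> (L/(L+r\<^sup>2)) * (sn/\<kappa>) * r powr (\<rho>-1)" .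
  have snk: "0 \<le> sn/\<kappa>" using assms by simp
  show "r \<le> 1 \<Longrightarrow> \<bar>e*(L*r powr (\<rho>-1)* sn)/N\<bar> \<le> (1+L)* sn/\<kappa> * r powr (\<rho>-1)"
  proof -
    have h: "(1+L)*(L+r\<^sup>2) = (L + r\<^sup>2) + L*(L+r\<^sup>2)" by (simp add: algebra_simps)
    have "0 \<le> L*(L+r\<^sup>2)" using assms Lr by simp
    hence "L \<le> (1+L)*(L+r\<^sup>2)" using h by (smt (verit) zero_le_power2)
    hence "L/(L+r\<^sup>2) \<le> 1+L" using Lr assms by (simp add: divide_le_eq)
    hence "(L/(L+r\<^sup>2)) * (sn/\<kappa>) * r powr (\<rho>-1) \<le> (1+L) * (sn/\<kappa>) * r powr (\<rho>-1)"
      using snk by (intro mult_right_mono) auto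
    thus ?thesis using main by simp
  qed
  show "1 \<le> r \<Longrightarrow> \<bar>e*(L*r powr (\<rho>-1)* sn)/N\<bar> \<le> (1+L)* sn/\<kappa> * r powr (\<rho>-3)"
  proof -
    assume r1: "1 \<le> r"
    have "L/(L+r\<^sup>2) \<le> L/r\<^sup>2" using assms Lr by (intro divide_left_mono) (auto intro: mult_pos_pos)
    also have "\<dots> \<le> (1+L)/r\<^sup>2" using assms by (intro divide_right_mono) auto
    finally have le: "(L/(L+r\<^sup>2)) * (sn/\<kappa>) * r powr (\<rho>-1) \<le> ((1+L)/r\<^sup>2) * (sn/\<kappa>) * r powr (\<rho>-1)"
      using snk by (intro mult_right_mono) auto
    have P: "r powr (\<rho>-1) = r powr (\<rho>-3) * r\<^sup>2"
    proof -
      have "r powr (\<rho>-1) = r powr ((\<rho>-3) + 2)" by simp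
      also have "\<dots> = r powr (\<rho>-3) * r powr 2" by (rule powr_add)
      also have "r powr 2 = r\<^sup>2" using assms by (simp add: powr_numeral)
      finally show ?thesis .
    qed
    have eq: "((1+L)/r\<^sup>2) * (sn/\<kappa>) * r powr (\<rho>-1) = (1+L)* sn/\<kappa> * r powr (\<rho>-3)"
      unfolding P using assms by (simp add: field_simps)
    show ?thesis using main le eq by linarith
  qed
qed

lemma sq_powr: "0 < (r::real) \<Longrightarrow> r powr (2*\<rho>) = (r powr \<rho>)\<^sup>2"
  by (simp add: power2_eq_square flip: powr_add)

theorem lemma2p4:
  fixes \<rho> \<gamma> T :: real and lam :: "nat \<Rightarrow> real"
  assumes "0 < \<rho>" "\<rho> < 1" "0 < \<gamma>" "0 < T"
    and "0 < lam 1"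
    and "\<And>k. k \<ge> 1 \<Longrightarrow> lam k \<le> lam (Suc k)"
  shows "(\<forall>t\<in>{0..T}. \<forall>k\<ge>1. A_rho \<rho> \<gamma> (lam k) t \<ge> C_const \<rho> \<gamma> (lam 1) T)
         \<and> C_const \<rho> \<gamma> (lam 1) T > 0"
proof -
  define s where "s = sin (\<rho> * pi)"
  define c where "c = cos (\<rho> * pi)"
  define l1 where "l1 = lam 1"
  have l1: "0 < l1" using assms l1_def by simp
  have s: "0 < s" unfolding s_def using assms by (intro sin_gt_zero) auto
  have cs: "c\<^sup>2 + s\<^sup>2 = 1" unfolding s_def c_def by (simp add: add.commute)
  have c1: "\<bar>c\<bar> < 1"
  proof -
    have "c\<^sup>2 < 1" using cs s by (smt (verit) zero_less_power2)
    thus ?thesis by (simp add: abs_square_less_1)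
  qed
  define Q where "Q = (\<lambda>r::real. r\<^sup>2 / l1\<^sup>2 + \<gamma>\<^sup>2 * r powr (2 * \<rho>) + 1)"
  define H where "H = (\<lambda>r::real. r powr (\<rho> - 1) * exp (- r * T) / Q r)"
  have CC: "C_const \<rho> \<gamma> (lam 1) T = \<gamma> * s / (3 * pi) * (LBINT r:{0<..}. H r)"
    unfolding C_const_def H_def Q_def s_def l1_def by simp
  have Q1: "1 \<le> Q r" for r unfolding Q_def by (simp add: add_nonneg_nonneg)
  have Qr: "r\<^sup>2 / l1\<^sup>2 \<le> Q r" for r unfolding Q_def by simp
  define \<kappa>H where "\<kappa>H = min 1 (1/l1\<^sup>2) / 2"
  have kH: "0 < \<kappa>H" unfolding \<kappa>H_def using l1 by simp
  have QH: "\<kappa>H * (1 + r\<^sup>2) \<le> Q r" for r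
  proof -
    have "min 1 (1/l1\<^sup>2) * r\<^sup>2 \<le> (1/l1\<^sup>2) * r\<^sup>2" by (intro mult_right_mono) auto
    hence "min 1 (1/l1\<^sup>2) * r\<^sup>2 \<le> r\<^sup>2 / l1\<^sup>2" by simp
    moreover have "min 1 (1/l1\<^sup>2) \<le> 1" by simp
    ultimately show ?thesis unfolding \<kappa>H_def using Q1[of r] Qr[of r] by (simp add: algebra_simps)
  qed
  have Hmeas: "H \<in> borel_measurable borel" unfolding H_def Q_def by measurable
  have Heq: "H r = exp (- r * T) * (1 * r powr (\<rho> - 1) * 1) / Q r" for r
    unfolding H_def by simp
  have Hint: "set_integrable lborel {0<..} H"
  proof (rule dominated[OF assms(1,2) Hmeas])
    fix r :: real assume "0 < r" "r \<le> 1"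
    thus "\<bar>H r\<bar> \<le> (1+1)*1/\<kappa>H * r powr (\<rho>-1)" unfolding Heq
      using bound_form(1)[of r \<kappa>H 1 1 "exp (- r * T)" "Q r" \<rho>] kH QH[of r] assms by simp
  next
    fix r :: real assume "1 \<le> r"
    thus "\<bar>H r\<bar> \<le> (1+1)*1/\<kappa>H * r powr (\<rho>-3)" unfolding Heq
      using bound_form(2)[of r \<kappa>H 1 1 "exp (- r * T)" "Q r" \<rho>] kH QH[of r] assms by simp
  qed
  have Hpos: "0 < H r" if "0 < r" for r
    unfolding H_def using that Q1[of r] by (intro divide_pos_pos mult_pos_pos) auto
  have Hne: "H x \<noteq> 0" if "0 < x" for x using Hpos[OF that] by simp
  have Ipos: "0 < (LBINT r:{0<..}. H r)"
  proof -
    define h where "h = (\<lambda>x::real. indicator {0<..} x *\<^sub>R H x)"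
    have hi: "integrable lborel h" using Hint unfolding set_integrable_def h_def .
    have eq: "(LBINT r:{0<..}. H r) = integral\<^sup>L lborel h"
      unfolding set_lebesgue_integral_def h_def ..
    have hnn: "0 \<le> h x" for x unfolding h_def using Hpos by (auto simp: indicator_def less_imp_le)
    have "integral\<^sup>L lborel h \<noteq> 0"
    proof
      assume "integral\<^sup>L lborel h = 0"
      hence "AE x in lborel. h x = 0"
        using integral_nonneg_eq_0_iff_AE[OF hi] hnn by simp
      hence "AE x in lborel. x \<notin> {0<..1::real}"
        by eventually_elim (auto simp: h_def indicator_def Hne)
      hence "{0<..1::real} \<in> null_sets lborel" by (subst AE_iff_null_sets) auto
      thus False using emeasure_lborel_Ioc[of 0 "1::real"] by (auto simp: null_sets_def)
    qed
    moreover have "0 \<le> integral\<^sup>L lborel h" using hnn by simp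
    ultimately show ?thesis using eq by simp
  qed
  have part2: "C_const \<rho> \<gamma> (lam 1) T > 0"
    unfolding CC using Ipos s assms by (intro mult_pos_pos divide_pos_pos) auto
  have part1: "A_rho \<rho> \<gamma> (lam k) t \<ge> C_const \<rho> \<gamma> (lam 1) T" if t: "t \<in> {0..T}" and k: "k \<ge> 1" for t k
  proof -
    define l where "l = lam k"
    have ll: "l1 \<le> l" unfolding l_def l1_def
      by (rule lift_Suc_mono_le_ivl[of "{1..}"]) (use assms(6) k in auto)
    have l: "0 < l" using ll l1 by simp
    define D where "D = (\<lambda>r::real. (- r + l * \<gamma> * r powr \<rho> * c + l)\<^sup>2 + (l * \<gamma> * r powr \<rho> * s)\<^sup>2)"
    define F where "F = (\<lambda>r::real. exp (- r * t) * (l\<^sup>2 * r powr (\<rho> - 1) * s) / D r)"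
    have AA: "A_rho \<rho> \<gamma> (lam k) t = \<gamma> / pi * (LBINT r:{0<..}. F r)"
      unfolding A_rho_def F_def D_def s_def c_def l_def by simp
    define \<epsilon> where "\<epsilon> = min (1/5) (\<gamma>\<^sup>2*((l/2) powr \<rho>)\<^sup>2/5)"
    have eps: "0 < \<epsilon>" unfolding \<epsilon>_def using l assms by simp
    define \<kappa> where "\<kappa> = (1 - \<bar>c\<bar>) * \<epsilon>"
    have kap: "0 < \<kappa>" unfolding \<kappa>_def using c1 eps by simp
    have Dlow: "\<kappa> * (l\<^sup>2 + r\<^sup>2) \<le> D r" if "0 < r" for r
    proof -
      have "\<kappa> * (l\<^sup>2 + r\<^sup>2) = (1 - \<bar>c\<bar>) * (\<epsilon> * (l\<^sup>2 + r\<^sup>2))" unfolding \<kappa>_def by simp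
      also have "\<dots> \<le> (1 - \<bar>c\<bar>) * ((l-r)\<^sup>2 + (l*\<gamma>*(r powr \<rho>))\<^sup>2)"
        using eps_bound[of l r \<rho> \<gamma>] l that assms c1 unfolding \<epsilon>_def
        by (intro mult_left_mono) auto
      also have "\<dots> \<le> D r" unfolding D_def using D_lower[OF cs, where r=r and l=l and g=\<gamma> and p="r powr \<rho>"] by simp
      finally show ?thesis .
    qed
    have Fmeas: "F \<in> borel_measurable borel" unfolding F_def D_def by measurable
    have et: "0 \<le> exp (- r * t)" "exp (- r * t) \<le> 1" if "0 < r" for r
      using that t by auto
    have Fint: "set_integrable lborel {0<..} F"
    proof (rule dominated[OF assms(1,2) Fmeas])
      fix r :: real assume r: "0 < r" "r \<le> 1"
      thus "\<bar>F r\<bar> \<le> (1+l\<^sup>2)* s/\<kappa> * r powr (\<rho>-1)" unfolding F_def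
        using bound_form(1)[of r \<kappa> "l\<^sup>2" s "exp (- r * t)" "D r" \<rho>] kap Dlow[of r] et[of r] s l by simp
    next
      fix r :: real assume r: "1 \<le> r"
      thus "\<bar>F r\<bar> \<le> (1+l\<^sup>2)* s/\<kappa> * r powr (\<rho>-3)" unfolding F_def
        using bound_form(2)[of r \<kappa> "l\<^sup>2" s "exp (- r * t)" "D r" \<rho>] kap Dlow[of r] et[of r] s l by simp
    qed
    have pw: "s/3 * H r \<le> F r" if r: "0 < r" for r
    proof -
      have Dpos: "0 < D r" using Dlow[OF r] kap l by (smt (verit) mult_pos_pos zero_less_power2 zero_le_power2)
      have Dup: "D r \<le> 3 * l\<^sup>2 * Q r"
        unfolding D_def Q_def sq_powr[OF r]
        using D_upper[OF l1 ll _ cs, where r=r and g=\<gamma> and p="r powr \<rho>"] r by simp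
      have nn: "0 \<le> l\<^sup>2 * r powr (\<rho> - 1) * s" using s by simp
      have "exp (- r * T) \<le> exp (- r * t)" using r t by auto
      hence "exp (- r * T) * (l\<^sup>2 * r powr (\<rho> - 1) * s) / D r \<le> F r"
        unfolding F_def using nn Dpos by (intro divide_right_mono mult_right_mono) auto
      moreover have "exp (- r * T) * (l\<^sup>2 * r powr (\<rho> - 1) * s) / (3 * l\<^sup>2 * Q r) \<le> exp (- r * T) * (l\<^sup>2 * r powr (\<rho> - 1) * s) / D r"
        using nn Dpos Dup l Q1[of r] by (intro divide_left_mono) (auto intro!: mult_pos_pos)
      moreover have "exp (- r * T) * (l\<^sup>2 * r powr (\<rho> - 1) * s) / (3 * l\<^sup>2 * Q r) = s/3 * H r"
        unfolding H_def using l by (simp add: field_simps)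
      ultimately show ?thesis by linarith
    qed
    have "(LBINT r:{0<..}. s/3 * H r) \<le> (LBINT r:{0<..}. F r)"
      by (rule set_integral_mono) (use Hint Fint pw in auto)
    hence "s/3 * (LBINT r:{0<..}. H r) \<le> (LBINT r:{0<..}. F r)" by simp
    hence "\<gamma> / pi * (s/3 * (LBINT r:{0<..}. H r)) \<le> \<gamma> / pi * (LBINT r:{0<..}. F r)"
      using assms by (intro mult_left_mono) auto
    thus ?thesis unfolding AA CC by (simp add: field_simps)
  qed
  show ?thesis using part1 part2 by auto
qed

end
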